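(* Let $K\subseteq\mathbb{R}^n$ be a proper cone and let $A\in\mathbb{R}^{n\times n}$ be $K$-monotone. Let $A=U-V$ be a $K$-regular splitting, with $U\geq_K 0$. Let $U=F-G=\overline{F}-\overline{G}$ be two $K$-weak regular splittings of type II of $U$ such that $VF^{-1}G=GF^{-1}V$ and $V\overline{F}^{-1}\overline{G}=\overline{G}\,\overline{F}^{-1}V$. For a positive integer $s$ let $$T_{s}=(F^{-1}G)^{s}+\sum_{j=0}^{s-1}(F^{-1}G)^{j}F^{-1}V,\qquad \overline{T}_{s}=(\overline{F}^{-1}\overline{G})^{s}+\sum_{j=0}^{s-1}(\overline{F}^{-1}\overline{G})^{j}\overline{F}^{-1}V.$$ If $\overline{G}\,\overline{F}^{-1}\geq_K GF^{-1}$, then $\rho(T_s)\leq\rho(\overline{T}_s)<1$.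
   Context: A proper cone $K\subseteq\mathbb{R}^n$ is a closed, convex, pointed, solid cone. For $M\in\mathbb{R}^{n\times n}$, $M\geq_K 0$ means $MK\subseteq K$, and $M\geq_K N$ means $M-N\geq_K0$. A matrix $A$ is $K$-monotone if $A$ is nonsingular and $A^{-1}\geq_K 0$. A splitting $A=U-V$ (with $U$ nonsingular) is $K$-regular if $U^{-1}\geq_K 0$ and $V\geq_K 0$; it is a $K$-weak regular splitting of type II if $U^{-1}\geq_K 0$ and $VU^{-1}\geq_K 0$. $\rho$ denotes spectral radius. *)

theory Defs
  imports "HOL-Analysis.Analysis"
begin

definition proper_cone :: "(real^'n) set \<Rightarrow> bool" where
  "proper_cone K \<longleftrightarrow> cone K \<and> closed K \<and> convex K \<and> K \<inter> uminus ` K = {0} \<and> interior K \<noteq> {}"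

definition K_nonneg :: "(real^'n) set \<Rightarrow> real^'n^'n \<Rightarrow> bool" where
  "K_nonneg K M \<longleftrightarrow> (\<forall>x\<in>K. M *v x \<in> K)"

definition K_ge :: "(real^'n) set \<Rightarrow> real^'n^'n \<Rightarrow> real^'n^'n \<Rightarrow> bool" where
  "K_ge K M N \<longleftrightarrow> K_nonneg K (M - N)"

definition K_monotone :: "(real^'n) set \<Rightarrow> real^'n^'n \<Rightarrow> bool" where
  "K_monotone K A \<longleftrightarrow> invertible A \<and> K_nonneg K (matrix_inv A)"

definition K_regular_splitting :: "(real^'n) set \<Rightarrow> real^'n^'n \<Rightarrow> real^'n^'n \<Rightarrow> real^'n^'n \<Rightarrow> bool" where
  "K_regular_splitting K A U V \<longleftrightarrow> A = U - V \<and> invertible U \<and> K_nonneg K (matrix_inv U) \<and> K_nonneg K V"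

definition K_weak_regular_splitting_II :: "(real^'n) set \<Rightarrow> real^'n^'n \<Rightarrow> real^'n^'n \<Rightarrow> real^'n^'n \<Rightarrow> bool" where
  "K_weak_regular_splitting_II K A U V \<longleftrightarrow> A = U - V \<and> invertible U \<and> K_nonneg K (matrix_inv U)
      \<and> K_nonneg K (V ** matrix_inv U)"

primrec matpow :: "real^'n^'n \<Rightarrow> nat \<Rightarrow> real^'n^'n" where
  "matpow M 0 = mat 1"
| "matpow M (Suc k) = M ** matpow M k"

definition complexify :: "real^'n^'n \<Rightarrow> complex^'n^'n" where
  "complexify M = (\<chi> i j. complex_of_real (M $ i $ j))"

definition eigenvalues :: "real^'n^'n \<Rightarrow> complex set" where
  "eigenvalues M = {c. \<exists>v. v \<noteq> 0 \<and> complexify M *v v = c *s v}"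

definition spectral_radius :: "real^'n^'n \<Rightarrow> real" where
  "spectral_radius M = Max (cmod ` eigenvalues M)"

end

theory Submission
  imports Defs "HOL-Computational_Algebra.Polynomial"
begin



lemma minv_l: "invertible (A::real^'n^'n) \<Longrightarrow> matrix_inv A ** A = mat 1"
  unfolding invertible_def matrix_inv_def by (rule someI2_ex) auto

lemma minv_r: "invertible (A::real^'n^'n) \<Longrightarrow> A ** matrix_inv A = mat 1"
  unfolding invertible_def matrix_inv_def by (rule someI2_ex) auto

lemma mm_diff_r: "((A::real^'n^'n) - B) ** C = A ** C - B ** C"
  by (simp add: vec_eq_iff matrix_matrix_mult_def sum_subtractf algebra_simps)

lemma mm_diff_l: "(C::real^'n^'n) ** (A - B) = C ** A - C ** B"
  by (simp add: vec_eq_iff matrix_matrix_mult_def sum_subtractf algebra_simps)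

lemma mm_add_r: "((A::real^'n^'n) + B) ** C = A ** C + B ** C"
  by (simp add: vec_eq_iff matrix_matrix_mult_def sum.distrib algebra_simps)

lemma mm_sum_l: "finite S \<Longrightarrow> (C::real^'n^'n) ** sum (f::_ \<Rightarrow> real^'n^'n) S = (\<Sum>i\<in>S. C ** f i)"
  by (induction S rule: finite_induct) (auto simp: matrix_add_ldistrib)

lemma mm_sum_r: "finite S \<Longrightarrow> sum (f::_ \<Rightarrow> real^'n^'n) S ** C = (\<Sum>i\<in>S. f i ** C)"
proof (induction S rule: finite_induct)
  case empty then show ?case by simp
next
  case (insert x F)
  then show ?case using mm_add_r[of "f x" "sum f F" C] by simp
qed

lemma mv_sum_r: "finite S \<Longrightarrow> sum f S *v (x::real^'n) = (\<Sum>i\<in>S. f i *v x)"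
  by (induction S rule: finite_induct) (auto simp: matrix_vector_mult_add_rdistrib)

lemma mv_diff: "(A::real^'n^'n) *v (x - y) = A *v x - A *v y"
  by (simp add: matrix_vector_mult_diff_distrib)

lemma mv_neg: "(A::real^'n^'n) *v (- x) = - (A *v x)"
  by (metis add.right_neutral diff_0 matrix_vector_mult_0_right mv_diff)

lemma matpow_comm: "matpow M k ** M = M ** matpow M k"
proof (induction k)
  case 0 then show ?case by simp
next
  case (Suc k)
  have "matpow M (Suc k) ** M = M ** (matpow M k ** M)" by (simp add: matrix_mul_assoc)
  also have "\<dots> = M ** matpow M (Suc k)" using Suc by simp
  finally show ?case .
qed

locale pcone =
  fixes K :: "(real^'n) set"
  assumes pc: "proper_cone K"
begin

lemma K_cone: "cone K" and K_closed: "closed K" and K_convex: "convex K"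
  using pc unfolding proper_cone_def by auto

lemma K_scale: "x \<in> K \<Longrightarrow> 0 \<le> c \<Longrightarrow> c *\<^sub>R x \<in> K"
  using K_cone unfolding cone_def by auto

lemma K_add: "x \<in> K \<Longrightarrow> y \<in> K \<Longrightarrow> x + y \<in> K"
proof -
  assume x: "x \<in> K" and y: "y \<in> K"
  have "(1/2) *\<^sub>R x + (1/2) *\<^sub>R y \<in> K"
    using K_convex x y unfolding convex_def by auto
  then have "2 *\<^sub>R ((1/2) *\<^sub>R x + (1/2) *\<^sub>R y) \<in> K" by (rule K_scale) auto
  then show ?thesis by (simp add: scaleR_add_right)
qed

lemma K_zero: "0 \<in> K"
  using pc unfolding proper_cone_def by auto

lemma K_pointed: "x \<in> K \<Longrightarrow> - x \<in> K \<Longrightarrow> x = 0"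
proof -
  assume "x \<in> K" "- x \<in> K"
  then have "x \<in> K \<inter> uminus ` K" by (auto intro: image_eqI[of _ _ "-x"])
  then show ?thesis using pc unfolding proper_cone_def by auto
qed

lemma K_sum: "finite S \<Longrightarrow> (\<And>i. i \<in> S \<Longrightarrow> f i \<in> K) \<Longrightarrow> sum f S \<in> K"
  by (induction S rule: finite_induct) (auto simp: K_zero K_add)

lemma K_interior_nonempty: "\<exists>e. e \<in> interior K"
  using pc unfolding proper_cone_def by auto

lemma K_int_scale: "z \<in> interior K \<Longrightarrow> 0 < c \<Longrightarrow> c *\<^sub>R z \<in> interior K"
proof -
  assume z: "z \<in> interior K" and c: "0 < c"
  obtain r where r: "r > 0" "ball z r \<subseteq> K" using z mem_interior by blast
  have "ball (c *\<^sub>R z) (c * r) \<subseteq> K"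
  proof
    fix w assume w: "w \<in> ball (c *\<^sub>R z) (c * r)"
    have "dist z ((1/c) *\<^sub>R w) = (1/c) * dist (c *\<^sub>R z) w"
    proof -
      have "z - (1/c) *\<^sub>R w = (1/c) *\<^sub>R (c *\<^sub>R z - w)" using c by (simp add: algebra_simps)
      then show ?thesis using c by (simp add: dist_norm)
    qed
    also have "\<dots> < r" using w c by (simp add: field_simps mult.commute)
    finally have "(1/c) *\<^sub>R w \<in> K" using r by auto
    then have "c *\<^sub>R ((1/c) *\<^sub>R w) \<in> K" using c K_scale[of "(1/c) *\<^sub>R w" c] by auto
    moreover have "c *\<^sub>R ((1/c) *\<^sub>R w) = w" using c by simp
    ultimately show "w \<in> K" by simp
  qed
  then show ?thesis using c r mem_interior by (metis mult_pos_pos)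
qed

lemma K_int_add: "y \<in> K \<Longrightarrow> z \<in> interior K \<Longrightarrow> y + z \<in> interior K"
proof -
  assume y: "y \<in> K" and z: "z \<in> interior K"
  obtain r where r: "r > 0" "ball z r \<subseteq> K" using z mem_interior by blast
  have "ball (y + z) r \<subseteq> K"
  proof
    fix w assume "w \<in> ball (y + z) r"
    then have "w - y \<in> ball z r" by (simp add: dist_norm algebra_simps)
    then have "w - y \<in> K" using r by auto
    then have "y + (w - y) \<in> K" using y K_add by blast
    then show "w \<in> K" by simp
  qed
  then show ?thesis using r mem_interior by blast
qed

lemma K_int_sub: "z \<in> interior K \<Longrightarrow> z \<in> K"
  using interior_subset by blast

definition NN :: "real^'n^'n \<Rightarrow> bool" where "NN M \<longleftrightarrow> K_nonneg K M"

lemma NN_D: "NN M \<Longrightarrow> x \<in> K \<Longrightarrow> M *v x \<in> K"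
  unfolding NN_def K_nonneg_def by auto

lemma NN_mult: "NN A \<Longrightarrow> NN B \<Longrightarrow> NN (A ** B)"
  unfolding NN_def K_nonneg_def by (simp add: matrix_vector_mul_assoc[symmetric])

lemma NN_add: "NN A \<Longrightarrow> NN B \<Longrightarrow> NN (A + B)"
  unfolding NN_def K_nonneg_def by (simp add: matrix_vector_mult_add_rdistrib K_add)

lemma NN_id: "NN (mat 1)"
  unfolding NN_def K_nonneg_def by simp

lemma NN_zero: "NN 0"
  unfolding NN_def K_nonneg_def by (simp add: K_zero)

lemma NN_sum: "finite S \<Longrightarrow> (\<And>i. i \<in> S \<Longrightarrow> NN (f i)) \<Longrightarrow> NN (sum f S)"
  by (induction S rule: finite_induct) (auto simp: NN_zero NN_add)

lemma NN_matpow: "NN M \<Longrightarrow> NN (matpow M k)"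
  by (induction k) (auto simp: NN_id NN_mult)

lemma NN_pow_mono: "NN P \<Longrightarrow> NN (Pb - P) \<Longrightarrow> NN (matpow Pb k - matpow P k)"
proof (induction k)
  case 0 then show ?case by (simp add: NN_zero)
next
  case (Suc k)
  have "matpow Pb (Suc k) - matpow P (Suc k) = Pb ** (matpow Pb k - matpow P k) + (Pb - P) ** matpow P k"
    by (simp add: mm_diff_l mm_diff_r)
  moreover have "NN Pb"
  proof -
    have "Pb = (Pb - P) + P" by simp
    then show ?thesis using Suc.prems NN_add by metis
  qed
  ultimately show ?case using Suc NN_add NN_mult NN_matpow by metis
qed

end


lemma complexify_mult: "complexify ((A::real^'n^'n) ** B) = complexify A ** complexify B"
  by (simp add: complexify_def vec_eq_iff matrix_matrix_mult_def)

lemma complexify_id: "complexify (mat 1 :: real^'n^'n) = mat 1"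
  by (simp add: complexify_def vec_eq_iff mat_def)

lemma eig_sim1:
  fixes A B T :: "real^'n^'n"
  assumes AB: "A ** B = mat 1" and BA: "B ** A = mat 1"
  shows "eigenvalues T \<subseteq> eigenvalues (A ** T ** B)"
proof
  fix c assume "c \<in> eigenvalues T"
  then obtain v where v: "v \<noteq> 0" "complexify T *v v = c *s v" unfolding eigenvalues_def by auto
  let ?w = "complexify A *v v"
  have "complexify B *v ?w = v"
    by (simp add: matrix_vector_mul_assoc complexify_mult[symmetric] BA complexify_id)
  then have w0: "?w \<noteq> 0" using v(1) by auto
  have "complexify (A ** T ** B) *v ?w = complexify A *v (complexify T *v (complexify B *v ?w))"
    by (simp add: complexify_mult matrix_vector_mul_assoc matrix_mul_assoc)
  also have "\<dots> = c *s ?w" using v \<open>complexify B *v ?w = v\<close> by (simp add: vec.scale)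
  finally show "c \<in> eigenvalues (A ** T ** B)" unfolding eigenvalues_def using w0 by auto
qed

lemma eig_sim:
  fixes F T :: "real^'n^'n"
  assumes "invertible F"
  shows "eigenvalues (F ** T ** matrix_inv F) = eigenvalues T"
proof
  show "eigenvalues T \<subseteq> eigenvalues (F ** T ** matrix_inv F)"
    by (rule eig_sim1) (use assms minv_l minv_r in auto)
  have "eigenvalues (F ** T ** matrix_inv F) \<subseteq> eigenvalues (matrix_inv F ** (F ** T ** matrix_inv F) ** F)"
    by (rule eig_sim1) (use assms minv_l minv_r in auto)
  also have "matrix_inv F ** (F ** T ** matrix_inv F) ** F = T"
    by (simp add: matrix_mul_assoc minv_l[OF assms] flip: matrix_mul_assoc)
       (simp add: matrix_mul_assoc minv_l[OF assms])
  finally show "eigenvalues (F ** T ** matrix_inv F) \<subseteq> eigenvalues T" .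
qed

lemma eig_real:
  fixes M :: "real^'n^'n"
  assumes "x \<noteq> 0" "M *v x = l *\<^sub>R x"
  shows "complex_of_real l \<in> eigenvalues M"
proof -
  let ?v = "(\<chi> i. complex_of_real (x $ i))"
  have "?v \<noteq> 0" using assms(1) by (auto simp: vec_eq_iff)
  moreover have "complexify M *v ?v = complex_of_real l *s ?v"
  proof -
    have "\<And>i. (\<Sum>j\<in>UNIV. M $ i $ j * x $ j) = l * x $ i"
      using assms(2) by (auto simp: vec_eq_iff matrix_vector_mult_def)
    then show ?thesis
      by (simp add: vec_eq_iff matrix_vector_mult_def complexify_def flip: of_real_mult of_real_sum)
  qed
  ultimately show ?thesis unfolding eigenvalues_def by blast
qed

lemma eig_bound:
  fixes M :: "real^'n^'n"
  assumes "c \<in> eigenvalues M"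
  shows "cmod c \<le> (\<Sum>i\<in>UNIV. \<Sum>j\<in>UNIV. \<bar>M $ i $ j\<bar>)"
proof -
  obtain v where v: "v \<noteq> 0" "complexify M *v v = c *s v" using assms unfolding eigenvalues_def by auto
  have "\<exists>i0. \<forall>j. cmod (v $ j) \<le> cmod (v $ i0)"
  proof -
    have fin: "finite (range (\<lambda>i. cmod (v $ i)))" by simp
    then have "Max (range (\<lambda>i. cmod (v $ i))) \<in> range (\<lambda>i. cmod (v $ i))" by (intro Max_in) auto
    then obtain i0 where "Max (range (\<lambda>i. cmod (v $ i))) = cmod (v $ i0)" by (metis imageE)
    then show ?thesis using fin by (metis Max_ge rangeI)
  qed
  then obtain i0 where i0: "\<And>j. cmod (v $ j) \<le> cmod (v $ i0)" by blast
  have pos: "cmod (v $ i0) > 0"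
  proof (rule ccontr)
    assume "\<not> ?thesis"
    then have "\<And>j. v $ j = 0" using i0 by (metis norm_ge_zero norm_le_zero_iff order.trans not_less)
    then show False using v(1) by (simp add: vec_eq_iff)
  qed
  have "c * v $ i0 = (\<Sum>j\<in>UNIV. complex_of_real (M $ i0 $ j) * v $ j)"
    using v(2) by (auto simp: vec_eq_iff matrix_vector_mult_def complexify_def)
  then have "cmod c * cmod (v $ i0) = cmod (\<Sum>j\<in>UNIV. complex_of_real (M $ i0 $ j) * v $ j)"
    by (metis norm_mult)
  also have "\<dots> \<le> (\<Sum>j\<in>UNIV. \<bar>M $ i0 $ j\<bar> * cmod (v $ j))"
    by (rule order.trans[OF norm_sum]) (simp add: norm_mult)
  also have "\<dots> \<le> (\<Sum>j\<in>UNIV. \<bar>M $ i0 $ j\<bar> * cmod (v $ i0))"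
    by (intro sum_mono mult_left_mono i0) auto
  also have "\<dots> = (\<Sum>j\<in>UNIV. \<bar>M $ i0 $ j\<bar>) * cmod (v $ i0)"
    by (simp add: sum_distrib_right)
  finally have "cmod c \<le> (\<Sum>j\<in>UNIV. \<bar>M $ i0 $ j\<bar>)" using pos by simp
  also have "\<dots> \<le> (\<Sum>i\<in>UNIV. \<Sum>j\<in>UNIV. \<bar>M $ i $ j\<bar>)"
    by (rule member_le_sum[where f="\<lambda>i. \<Sum>j\<in>UNIV. \<bar>M $ i $ j\<bar>"]) (auto intro: sum_nonneg)
  finally show ?thesis .
qed

lemma mat_mv: "(mat c :: 'a::comm_ring_1^'n^'n) *v v = c *s v"
proof -
  have "(\<Sum>j\<in>UNIV. (if i = j then c else 0) * v $ j) = c * v $ i" for i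
  proof -
    have "(\<Sum>j\<in>UNIV. (if i = j then c else 0) * v $ j) = (\<Sum>j\<in>UNIV. if i = j then c * v $ j else 0)"
      by (intro sum.cong) auto
    then show ?thesis by simp
  qed
  then show ?thesis by (simp add: vec_eq_iff matrix_vector_mult_def mat_def)
qed

lemma det_poly:
  fixes M :: "complex^'n^'n"
  shows "\<exists>p. \<forall>c. det (M - mat c) = poly p c"
proof -
  let ?p = "\<Sum>q\<in>{q. q permutes (UNIV::'n set)}. [:of_int (sign q):] *
     (\<Prod>i\<in>UNIV. [: M $ i $ q i, - (if i = q i then 1 else 0) :])"
  have e: "(M - mat c) $ i $ j = poly [: M $ i $ j, - (if i = j then 1 else 0) :] c" for i j c
    by (simp add: mat_def)
  have "det (M - mat c) = poly ?p c" for c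
    unfolding det_def e by (simp add: poly_sum poly_prod)
  then show ?thesis by blast
qed

lemma finite_eig: "finite (eigenvalues (M::real^'n^'n))"
proof -
  obtain p where p: "\<And>c. det (complexify M - mat c) = poly p c" using det_poly by blast
  define c0 where "c0 = complex_of_real ((\<Sum>i\<in>UNIV. \<Sum>j\<in>UNIV. \<bar>M $ i $ j\<bar>) + 1)"
  have "c0 \<notin> eigenvalues M"
  proof
    assume "c0 \<in> eigenvalues M"
    have S0: "(\<Sum>i\<in>UNIV. \<Sum>j\<in>UNIV. \<bar>M $ i $ j\<bar>) \<ge> 0" by (intro sum_nonneg) auto
    have "cmod c0 = (\<Sum>i\<in>UNIV. \<Sum>j\<in>UNIV. \<bar>M $ i $ j\<bar>) + 1"
      unfolding c0_def norm_of_real using S0 by simp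
    with eig_bound[OF \<open>c0 \<in> eigenvalues M\<close>] show False by simp
  qed
  have "det (complexify M - mat c0) \<noteq> 0"
  proof -
    have "inj ((*v) (complexify M - mat c0))"
    proof (rule injI)
      fix x y assume "(complexify M - mat c0) *v x = (complexify M - mat c0) *v y"
      then have e: "(complexify M - mat c0) *v (x - y) = 0"
        by (simp add: matrix_vector_mult_diff_distrib)
      have "complexify M *v (x - y) = c0 *s (x - y)"
      proof -
        have "mat c0 *v (x - y) = c0 *s (x - y)" by (rule mat_mv)
        then show ?thesis using e by (simp add: matrix_vector_mult_diff_rdistrib)
      qed
      then have "x - y = 0" using \<open>c0 \<notin> eigenvalues M\<close> unfolding eigenvalues_def by blast
      then show "x = y" by simp
    qed
    then show ?thesis
      using det_nz_iff_inj_gen[OF matrix_vector_mul_linear_gen] matrix_of_matrix_vector_mul by metis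
  qed
  then have "p \<noteq> 0" using p by auto
  have "eigenvalues M \<subseteq> {c. poly p c = 0}"
  proof
    fix c assume "c \<in> eigenvalues M"
    then obtain v where v: "v \<noteq> 0" "complexify M *v v = c *s v" unfolding eigenvalues_def by auto
    have "mat c *v v = c *s v" by (rule mat_mv)
    then have "(complexify M - mat c) *v v = 0" using v by (simp add: matrix_vector_mult_diff_rdistrib)
    then have "\<not> inj ((*v) (complexify M - mat c))" using v(1)
      by (metis injD matrix_vector_mult_0_right)
    then have "det (complexify M - mat c) = 0"
      using det_nz_iff_inj_gen[OF matrix_vector_mul_linear_gen] matrix_of_matrix_vector_mul by metis
    then show "c \<in> {c. poly p c = 0}" using p by simp
  qed
  then show ?thesis using poly_roots_finite[OF \<open>p \<noteq> 0\<close>] finite_subset by blast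
qed



context pcone
begin

lemma K_functional: "\<exists>a b. b > 0 \<and> (\<forall>x\<in>K. b * norm x \<le> a \<bullet> x)"
proof -
  let ?S = "K \<inter> sphere (0::real^'n) 1"
  let ?C = "convex hull ?S"
  have "compact ?S" by (rule closed_Int_compact[OF K_closed compact_sphere])
  then have cC: "compact ?C" by (rule compact_convex_hull)
  have "0 \<notin> ?C"
  proof
    assume "0 \<in> ?C"
    then obtain S u where S: "finite S" "S \<subseteq> ?S" "\<forall>x\<in>S. 0 \<le> u x" "sum u S = 1"
      "(\<Sum>v\<in>S. u v *\<^sub>R v) = 0"
      unfolding convex_hull_explicit by blast
    obtain v0 where v0: "v0 \<in> S" "u v0 > 0"
    proof (rule ccontr)
      assume "\<not> thesis"
      then have "\<forall>v\<in>S. u v \<le> 0" using that by force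
      then have "sum u S \<le> 0" by (simp add: sum_nonpos)
      then show False using S(4) by simp
    qed
    define r where "r = (\<Sum>v\<in>S-{v0}. u v *\<^sub>R v)"
    have rK: "r \<in> K" unfolding r_def using S by (intro K_sum) (auto intro!: K_scale)
    have "(\<Sum>v\<in>S. u v *\<^sub>R v) = u v0 *\<^sub>R v0 + r" unfolding r_def by (rule sum.remove[OF S(1) v0(1)])
    then have eq: "u v0 *\<^sub>R v0 = - r" using S(5) by (simp add: eq_neg_iff_add_eq_0)
    have "u v0 *\<^sub>R v0 \<in> K" using v0 S(2) by (intro K_scale) auto
    moreover have "- (u v0 *\<^sub>R v0) \<in> K" using eq rK by simp
    ultimately have "u v0 *\<^sub>R v0 = 0" by (rule K_pointed)
    then have "v0 = 0" using v0(2) by simp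
    then show False using v0(1) S(2) by auto
  qed
  then obtain a b where ab: "a \<noteq> 0" "0 < b" "\<forall>x\<in>?C. b < a \<bullet> x"
    using separating_hyperplane_closed_0[OF convex_convex_hull compact_imp_closed[OF cC]] by blast
  have "\<forall>x\<in>K. b * norm x \<le> a \<bullet> x"
  proof
    fix x assume x: "x \<in> K"
    show "b * norm x \<le> a \<bullet> x"
    proof (cases "x = 0")
      case True then show ?thesis by simp
    next
      case False
      let ?y = "(1 / norm x) *\<^sub>R x"
      have "?y \<in> ?S" using x False by (auto intro!: K_scale)
      then have "?y \<in> ?C" by (rule hull_inc)
      then have "b < a \<bullet> ?y" using ab by auto
      then have "b < (a \<bullet> x) / norm x" by (simp add: inner_scaleR_right)
      then show ?thesis using False by (simp add: field_simps)
    qed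
  qed
  then show ?thesis using ab(2) by blast
qed

lemma ucw:
  assumes Y: "NN Y" and x: "x \<in> interior K" and l: "0 \<le> l"
    and lx: "l *\<^sub>R x - Y *v x \<in> K" and c: "c \<in> eigenvalues Y"
  shows "cmod c \<le> l"
proof (rule ccontr)
  assume "\<not> ?thesis"
  then have cl: "l < cmod c" by simp
  then have cpos: "cmod c > 0" using l by linarith
  obtain v where v: "v \<noteq> 0" "complexify Y *v v = c *s v" using c unfolding eigenvalues_def by auto
  define ap where "ap \<phi> = (\<chi> i. Re (cis \<phi> * v $ i))" for \<phi>
  have cexp: "c = complex_of_real (cmod c) * cis (Arg c)"
    using rcis_cmod_Arg[of c] by (simp add: rcis_def)
  have vi: "c * v $ i = (\<Sum>j\<in>UNIV. complex_of_real (Y $ i $ j) * v $ j)" for i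
    using v(2) by (auto simp: vec_eq_iff matrix_vector_mult_def complexify_def)
  have ap_Y: "Y *v ap \<phi> = cmod c *\<^sub>R ap (\<phi> + Arg c)" for \<phi>
  proof -
    have "(\<Sum>j\<in>UNIV. Y $ i $ j * Re (cis \<phi> * v $ j)) = cmod c * Re (cis (\<phi> + Arg c) * v $ i)" for i
    proof -
      have "(\<Sum>j\<in>UNIV. Y $ i $ j * Re (cis \<phi> * v $ j))
          = Re (cis \<phi> * (\<Sum>j\<in>UNIV. complex_of_real (Y $ i $ j) * v $ j))"
        by (simp add: sum_distrib_left Re_sum mult.left_commute) (rule sum.cong; simp add: algebra_simps)
      also have "\<dots> = Re (cis \<phi> * (c * v $ i))" by (simp add: vi)
      also have "\<dots> = Re (complex_of_real (cmod c) * (cis \<phi> * cis (Arg c) * v $ i))"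
        by (subst cexp) (simp add: ac_simps)
      also have "\<dots> = cmod c * Re (cis (\<phi> + Arg c) * v $ i)"
        by (simp add: cis_mult)
      finally show ?thesis .
    qed
    then show ?thesis by (simp add: vec_eq_iff matrix_vector_mult_def ap_def)
  qed
  have ap_neg: "ap (\<phi> + pi) = - ap \<phi>" for \<phi>
    by (simp add: ap_def vec_eq_iff minus_cis[symmetric])
  define Bv where "Bv = (\<Sum>i\<in>UNIV. cmod (v $ i))"
  have Bv0: "Bv \<ge> 0" unfolding Bv_def by (intro sum_nonneg) auto
  have ap_bound: "norm (ap \<phi>) \<le> Bv" for \<phi>
  proof -
    have "norm (ap \<phi>) \<le> (\<Sum>i\<in>UNIV. \<bar>ap \<phi> $ i\<bar>)" by (rule norm_le_l1_cart)
    also have "\<dots> \<le> Bv" unfolding Bv_def ap_def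
    proof (intro sum_mono)
      fix i
      have "\<bar>Re (cis \<phi> * v $ i)\<bar> \<le> cmod (cis \<phi> * v $ i)" by (rule abs_Re_le_cmod)
      also have "\<dots> = cmod (v $ i)" by (simp add: norm_mult)
      finally show "\<bar>(\<chi> i. Re (cis \<phi> * v $ i)) $ i\<bar> \<le> cmod (v $ i)" by simp
    qed
    finally show ?thesis .
  qed
  have ap_zero: "v = 0" if "\<forall>\<phi>. ap \<phi> = 0"
  proof -
    have "v $ i = 0" for i
    proof -
      have "ap 0 $ i = 0" "ap (- (pi/2)) $ i = 0" using that by auto
      moreover have "cis (- (pi/2)) = - \<i>" by (simp add: complex_eq_iff)
      ultimately show ?thesis by (simp add: ap_def complex_eq_iff)
    qed
    then show ?thesis by (simp add: vec_eq_iff)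
  qed
  obtain r where r: "r > 0" "ball x r \<subseteq> K" using x mem_interior by blast
  define S where "S = {\<alpha>. 0 \<le> \<alpha> \<and> (\<forall>\<phi>. \<alpha> *\<^sub>R x - ap \<phi> \<in> K)}"
  define \<alpha>1 where "\<alpha>1 = Bv / r + 1"
  have a1pos: "\<alpha>1 > 0" unfolding \<alpha>1_def using Bv0 r by (simp add: add_nonneg_pos)
  have "\<alpha>1 \<in> S"
  proof -
    have "\<alpha>1 *\<^sub>R x - ap \<phi> \<in> K" for \<phi>
    proof -
      have "norm ((1/\<alpha>1) *\<^sub>R ap \<phi>) \<le> Bv / \<alpha>1"
        using ap_bound[of \<phi>] a1pos by (simp add: divide_right_mono field_simps)
      also have "\<dots> < r" unfolding \<alpha>1_def using r Bv0 by (simp add: field_simps)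
      finally have "x - (1/\<alpha>1) *\<^sub>R ap \<phi> \<in> ball x r" by (simp add: dist_norm)
      then have "x - (1/\<alpha>1) *\<^sub>R ap \<phi> \<in> K" using r by auto
      then have "\<alpha>1 *\<^sub>R (x - (1/\<alpha>1) *\<^sub>R ap \<phi>) \<in> K" using a1pos by (intro K_scale) auto
      then show ?thesis using a1pos by (simp add: scaleR_diff_right)
    qed
    then show ?thesis unfolding S_def using a1pos by auto
  qed
  have Sclosed: "closed S"
  proof -
    have "S = {\<alpha>. 0 \<le> \<alpha>} \<inter> (\<Inter>\<phi>. (\<lambda>\<alpha>. \<alpha> *\<^sub>R x - ap \<phi>) -` K)" unfolding S_def by auto
    moreover have "closed ((\<lambda>\<alpha>. \<alpha> *\<^sub>R x - ap \<phi>) -` K)" for \<phi>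
      by (intro closed_vimage K_closed continuous_intros)
    ultimately show ?thesis by (auto intro!: closed_Int closed_INT simp: closed_Collect_le)
  qed
  have bdd: "bdd_below S" unfolding S_def by (auto intro: bdd_belowI[of _ 0])
  define \<alpha>0 where "\<alpha>0 = Inf S"
  have a0S: "\<alpha>0 \<in> S" unfolding \<alpha>0_def using \<open>\<alpha>1 \<in> S\<close> bdd Sclosed by (intro closed_contains_Inf) auto
  have a0pos: "\<alpha>0 > 0"
  proof (rule ccontr)
    assume "\<not> ?thesis"
    then have "\<alpha>0 = 0" using a0S unfolding S_def by auto
    then have h: "- ap \<phi> \<in> K" for \<phi> using a0S unfolding S_def by auto
    have "ap \<phi> = 0" for \<phi>
    proof -
      have "- ap (\<phi> + pi) \<in> K" by (rule h)
      then have "ap \<phi> \<in> K" by (simp add: ap_neg)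
      then show ?thesis using h[of \<phi>] K_pointed by blast
    qed
    then show False using ap_zero v(1) by blast
  qed
  define \<alpha>' where "\<alpha>' = \<alpha>0 * l / cmod c"
  have "\<alpha>' \<in> S"
  proof -
    have "\<alpha>' *\<^sub>R x - ap \<psi> \<in> K" for \<psi>
    proof -
      have "\<alpha>0 *\<^sub>R x - ap (\<psi> - Arg c) \<in> K" using a0S unfolding S_def by auto
      then have "Y *v (\<alpha>0 *\<^sub>R x - ap (\<psi> - Arg c)) \<in> K" using Y NN_D by blast
      then have h1: "\<alpha>0 *\<^sub>R (Y *v x) - cmod c *\<^sub>R ap \<psi> \<in> K"
        by (simp add: mv_diff matrix_vector_mult_scaleR ap_Y)
      have h2: "\<alpha>0 *\<^sub>R (l *\<^sub>R x - Y *v x) \<in> K" using lx a0pos by (intro K_scale) auto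
      have "(\<alpha>0 *\<^sub>R (Y *v x) - cmod c *\<^sub>R ap \<psi>) + \<alpha>0 *\<^sub>R (l *\<^sub>R x - Y *v x) \<in> K"
        using h1 h2 by (rule K_add)
      then have "(\<alpha>0 * l) *\<^sub>R x - cmod c *\<^sub>R ap \<psi> \<in> K" by (simp add: algebra_simps)
      then have "(1 / cmod c) *\<^sub>R ((\<alpha>0 * l) *\<^sub>R x - cmod c *\<^sub>R ap \<psi>) \<in> K"
        using cpos by (intro K_scale) auto
      then show ?thesis unfolding \<alpha>'_def using cpos by (simp add: scaleR_diff_right)
    qed
    moreover have "0 \<le> \<alpha>'" unfolding \<alpha>'_def using a0pos l cpos by simp
    ultimately show ?thesis unfolding S_def by auto
  qed
  then have "\<alpha>0 \<le> \<alpha>'" unfolding \<alpha>0_def using bdd by (rule cInf_lower)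
  moreover have "\<alpha>' < \<alpha>0" unfolding \<alpha>'_def using a0pos cl cpos by (simp add: field_simps)
  ultimately show False by simp
qed

end


context pcone
begin

lemma approx:
  assumes Y: "NN Y"
  shows "\<exists>L z. z \<in> K \<and> z \<noteq> 0 \<and> Y *v z = L *\<^sub>R z \<and> 0 \<le> L \<and> (\<forall>c\<in>eigenvalues Y. cmod c \<le> L)
     \<and> (\<forall>t>L. \<exists>x t'. x \<in> interior K \<and> 0 \<le> t' \<and> t' < t \<and> t' *\<^sub>R x - Y *v x \<in> K)"
proof -
  obtain a b where ab: "b > 0" "\<forall>x\<in>K. b * norm x \<le> a \<bullet> x" using K_functional by blast
  have anonneg: "y \<in> K \<Longrightarrow> 0 \<le> a \<bullet> y" for y
    using ab by (metis mult_nonneg_nonneg norm_ge_zero order.trans less_imp_le)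
  obtain e where e: "e \<in> interior K" using K_interior_nonempty by blast
  have eK: "e \<in> K" using e K_int_sub by blast
  have e0: "e \<noteq> 0"
  proof
    assume "e = 0"
    obtain r where r: "r > 0" "ball e r \<subseteq> K" using e mem_interior by blast
    define w :: "real^'n" where "w = (r/2) *\<^sub>R axis undefined (1::real)"
    have nw: "norm w = r/2" unfolding w_def using r by (simp add: norm_axis_1)
    have "w \<in> K" "- w \<in> K" using r nw \<open>e = 0\<close> by (auto simp: dist_norm)
    then have "w = 0" by (rule K_pointed)
    then show False using nw r by simp
  qed
  have ae: "a \<bullet> e > 0"
  proof -
    have "b * norm e > 0" using ab e0 by simp
    then show ?thesis using ab eK by (meson less_le_trans)
  qed
  define B where "B = K \<inter> {x. a \<bullet> x = 1}"
  have Bcomp: "compact B"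
  proof -
    have "B \<subseteq> cball 0 (1/b)"
    proof
      fix x assume "x \<in> B"
      then have "b * norm x \<le> 1" using ab unfolding B_def by auto
      then show "x \<in> cball 0 (1/b)" using ab by (simp add: field_simps)
    qed
    then have "bounded B" using bounded_cball bounded_subset by blast
    moreover have "closed B" unfolding B_def by (intro closed_Int K_closed closed_hyperplane)
    ultimately show ?thesis by (simp add: compact_eq_bounded_closed)
  qed
  have Bconv: "convex B" unfolding B_def by (intro convex_Int K_convex convex_hyperplane)
  have Bne: "B \<noteq> {}"
  proof -
    have "(1 / (a \<bullet> e)) *\<^sub>R e \<in> B" unfolding B_def using ae eK by (auto intro!: K_scale)
    then show ?thesis by auto
  qed
  have step: "\<exists>x. x \<in> B \<and> x \<in> interior K \<and> Y *v x + \<epsilon> *\<^sub>R e = (a \<bullet> (Y *v x) + \<epsilon> * (a \<bullet> e)) *\<^sub>R x"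
    if eps: "\<epsilon> > 0" for \<epsilon>
  proof -
    define f where "f x = (1 / (a \<bullet> (Y *v x + \<epsilon> *\<^sub>R e))) *\<^sub>R (Y *v x + \<epsilon> *\<^sub>R e)" for x
    have den: "a \<bullet> (Y *v x + \<epsilon> *\<^sub>R e) > 0" if "x \<in> B" for x
    proof -
      have "Y *v x \<in> K" using that Y NN_D unfolding B_def by auto
      then have "0 \<le> a \<bullet> (Y *v x)" by (rule anonneg)
      moreover have "0 < \<epsilon> * (a \<bullet> e)" using eps ae by simp
      ultimately show ?thesis by (simp add: inner_add_right)
    qed
    have c1: "continuous_on B (\<lambda>x. Y *v x + \<epsilon> *\<^sub>R e)"
      by (intro continuous_intros matrix_vector_mult_linear_continuous_on)
    have c2: "continuous_on B (\<lambda>x. a \<bullet> (Y *v x + \<epsilon> *\<^sub>R e))"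
      using c1 by (intro continuous_intros)
    have c3: "continuous_on B (\<lambda>x. 1 / (a \<bullet> (Y *v x + \<epsilon> *\<^sub>R e)))"
      using c2 den by (intro continuous_on_divide continuous_on_const) (auto simp: less_le)
    have cont: "continuous_on B f"
      unfolding f_def using c3 c1 by (rule continuous_on_scaleR)
    have maps: "f \<in> B \<rightarrow> B"
    proof
      fix x assume x: "x \<in> B"
      have "Y *v x + \<epsilon> *\<^sub>R e \<in> K" using x Y NN_D eK eps unfolding B_def by (auto intro!: K_add K_scale)
      then have "f x \<in> K" unfolding f_def using den[OF x] by (auto intro!: K_scale)
      moreover have "a \<bullet> f x = 1" unfolding f_def using den[OF x] by simp
      ultimately show "f x \<in> B" unfolding B_def by auto
    qed
    obtain x where x: "x \<in> B" "f x = x" using brouwer[OF Bcomp Bconv Bne cont maps] by blast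
    define lam where "lam = a \<bullet> (Y *v x + \<epsilon> *\<^sub>R e)"
    have lpos: "lam > 0" unfolding lam_def using den[OF x(1)] .
    have eq: "Y *v x + \<epsilon> *\<^sub>R e = lam *\<^sub>R x"
    proof -
      have "lam *\<^sub>R x = lam *\<^sub>R f x" using x by simp
      also have "\<dots> = Y *v x + \<epsilon> *\<^sub>R e" unfolding f_def lam_def[symmetric] using lpos by simp
      finally show ?thesis by simp
    qed
    have "Y *v x + \<epsilon> *\<^sub>R e \<in> interior K"
      using x(1) Y NN_D unfolding B_def by (intro K_int_add K_int_scale e eps) auto
    then have "(1/lam) *\<^sub>R (Y *v x + \<epsilon> *\<^sub>R e) \<in> interior K" using lpos by (intro K_int_scale) auto
    then have "x \<in> interior K" using eq lpos by simp
    moreover have "lam = a \<bullet> (Y *v x) + \<epsilon> * (a \<bullet> e)" unfolding lam_def by (simp add: inner_add_right)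
    ultimately show ?thesis using x(1) eq by auto
  qed
  define eps where "eps k = inverse (real (Suc k))" for k
  have epspos: "eps k > 0" for k unfolding eps_def by simp
  have "\<forall>k. \<exists>x. x \<in> B \<and> x \<in> interior K \<and> Y *v x + eps k *\<^sub>R e = (a \<bullet> (Y *v x) + eps k * (a \<bullet> e)) *\<^sub>R x"
    using step epspos by blast
  then obtain xs where xs: "\<And>k. xs k \<in> B" "\<And>k. xs k \<in> interior K"
    "\<And>k. Y *v xs k + eps k *\<^sub>R e = (a \<bullet> (Y *v xs k) + eps k * (a \<bullet> e)) *\<^sub>R xs k"
    by metis
  define lam where "lam k = a \<bullet> (Y *v xs k) + eps k * (a \<bullet> e)" for k
  obtain l r where lr: "l \<in> B" "strict_mono r" "(xs \<circ> r) \<longlonglongrightarrow> l"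
    using compact_imp_seq_compact[OF Bcomp] xs(1) unfolding seq_compact_def by metis
  have xr: "(\<lambda>k. xs (r k)) \<longlonglongrightarrow> l" using lr(3) by (simp add: o_def)
  have er: "(\<lambda>k. eps (r k)) \<longlonglongrightarrow> 0"
    using LIMSEQ_subseq_LIMSEQ[OF LIMSEQ_inverse_real_of_nat lr(2)] unfolding eps_def by (simp add: o_def)
  have Yr: "(\<lambda>k. Y *v xs (r k)) \<longlonglongrightarrow> Y *v l"
    by (rule bounded_linear.tendsto[OF matrix_vector_mul_bounded_linear xr])
  define L where "L = a \<bullet> (Y *v l)"
  have lamr: "(\<lambda>k. lam (r k)) \<longlonglongrightarrow> L"
  proof -
    have "(\<lambda>k. a \<bullet> (Y *v xs (r k)) + eps (r k) * (a \<bullet> e)) \<longlonglongrightarrow> a \<bullet> (Y *v l) + 0 * (a \<bullet> e)"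
      by (intro tendsto_intros Yr er)
    then show ?thesis unfolding lam_def L_def by simp
  qed
  have eqlim: "Y *v l = L *\<^sub>R l"
  proof -
    have "(\<lambda>k. Y *v xs (r k) + eps (r k) *\<^sub>R e) \<longlonglongrightarrow> Y *v l + 0 *\<^sub>R e"
      by (intro tendsto_intros Yr er)
    moreover have "(\<lambda>k. Y *v xs (r k) + eps (r k) *\<^sub>R e) = (\<lambda>k. lam (r k) *\<^sub>R xs (r k))"
      using xs(3) unfolding lam_def by auto
    moreover have "(\<lambda>k. lam (r k) *\<^sub>R xs (r k)) \<longlonglongrightarrow> L *\<^sub>R l"
      by (intro tendsto_intros lamr xr)
    ultimately show ?thesis using LIMSEQ_unique by fastforce
  qed
  have lK: "l \<in> K" and l0: "l \<noteq> 0" using lr(1) unfolding B_def by auto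
  have L0: "0 \<le> L" unfolding L_def using lK Y NN_D anonneg by blast
  have lam_ge: "0 \<le> lam k" for k
    unfolding lam_def using xs(1)[of k] Y NN_D anonneg epspos[of k] ae unfolding B_def
    by (intro add_nonneg_nonneg mult_nonneg_nonneg) auto
  have lamx: "lam k *\<^sub>R xs k - Y *v xs k \<in> K" for k
  proof -
    have "lam k *\<^sub>R xs k - Y *v xs k = eps k *\<^sub>R e" using xs(3)[of k] unfolding lam_def by (simp add: algebra_simps)
    then show ?thesis using eK epspos[of k] by (auto intro!: K_scale)
  qed
  have eigb: "\<forall>c\<in>eigenvalues Y. cmod c \<le> L"
  proof
    fix c assume c: "c \<in> eigenvalues Y"
    have "cmod c \<le> lam (r k)" for k by (rule ucw[OF Y xs(2) lam_ge lamx c])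
    then show "cmod c \<le> L" using lamr by (intro LIMSEQ_le_const) auto
  qed
  have tt: "\<exists>x t'. x \<in> interior K \<and> 0 \<le> t' \<and> t' < t \<and> t' *\<^sub>R x - Y *v x \<in> K" if t: "t > L" for t
  proof -
    have "eventually (\<lambda>k. lam (r k) < t) sequentially" using order_tendstoD(2)[OF lamr t] .
    then obtain N where "lam (r N) < t" unfolding eventually_sequentially by auto
    then show ?thesis using xs(2) lam_ge lamx by blast
  qed
  show ?thesis using lK l0 eqlim L0 eigb tt by blast
qed

lemma KR:
  assumes Y: "NN Y"
  shows "\<exists>z. z \<in> K \<and> z \<noteq> 0 \<and> Y *v z = spectral_radius Y *\<^sub>R z"
    and "0 \<le> spectral_radius Y"
    and "\<And>t. spectral_radius Y < t \<Longrightarrow> \<exists>x t'. x \<in> interior K \<and> 0 \<le> t' \<and> t' < t \<and> t' *\<^sub>R x - Y *v x \<in> K"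
proof -
  obtain L z where Lz: "z \<in> K" "z \<noteq> 0" "Y *v z = L *\<^sub>R z" "0 \<le> L" "\<forall>c\<in>eigenvalues Y. cmod c \<le> L"
    "\<forall>t>L. \<exists>x t'. x \<in> interior K \<and> 0 \<le> t' \<and> t' < t \<and> t' *\<^sub>R x - Y *v x \<in> K"
    using approx[OF Y] by blast
  have "spectral_radius Y = L"
    unfolding spectral_radius_def
  proof (rule Max_eqI)
    show "finite (cmod ` eigenvalues Y)" using finite_eig by blast
    show "\<And>y. y \<in> cmod ` eigenvalues Y \<Longrightarrow> y \<le> L" using Lz(5) by auto
    have "complex_of_real L \<in> eigenvalues Y" using eig_real Lz(2,3) by blast
    moreover have "cmod (complex_of_real L) = L" using Lz(4) by simp
    ultimately show "L \<in> cmod ` eigenvalues Y" by (metis image_eqI)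
  qed
  then show "\<exists>z. z \<in> K \<and> z \<noteq> 0 \<and> Y *v z = spectral_radius Y *\<^sub>R z"
    and "0 \<le> spectral_radius Y"
    and "\<And>t. spectral_radius Y < t \<Longrightarrow> \<exists>x t'. x \<in> interior K \<and> 0 \<le> t' \<and> t' < t \<and> t' *\<^sub>R x - Y *v x \<in> K"
    using Lz by auto
qed

lemma RP:
  assumes Y: "NN Y" and t: "spectral_radius Y < t" and d: "t *\<^sub>R d - Y *v d \<in> K"
  shows "d \<in> K"
proof -
  obtain z t' where z: "z \<in> interior K" "0 \<le> t'" "t' < t" "t' *\<^sub>R z - Y *v z \<in> K"
    using KR(3)[OF Y t] by blast
  have tpos: "t > 0" using z by linarith
  obtain r where r: "r > 0" "ball z r \<subseteq> K" using z(1) mem_interior by blast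
  define S where "S = {\<beta>. 0 \<le> \<beta> \<and> d + \<beta> *\<^sub>R z \<in> K}"
  define \<beta>1 where "\<beta>1 = norm d / r + 1"
  have b1pos: "\<beta>1 > 0" unfolding \<beta>1_def using r by (simp add: add_nonneg_pos)
  have "\<beta>1 \<in> S"
  proof -
    have "norm ((1/\<beta>1) *\<^sub>R d) = norm d / \<beta>1" using b1pos by simp
    also have "\<dots> < r"
    proof -
      have "\<beta>1 * r = norm d + r" unfolding \<beta>1_def using r by (simp add: field_simps)
      then have "norm d < r * \<beta>1" using r by (simp add: mult.commute)
      then show ?thesis using b1pos by (simp add: divide_less_eq)
    qed
    finally have "z + (1/\<beta>1) *\<^sub>R d \<in> ball z r" by (simp add: dist_norm)
    then have "z + (1/\<beta>1) *\<^sub>R d \<in> K" using r by auto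
    then have "\<beta>1 *\<^sub>R (z + (1/\<beta>1) *\<^sub>R d) \<in> K" using b1pos by (intro K_scale) auto
    then have "d + \<beta>1 *\<^sub>R z \<in> K" using b1pos by (simp add: scaleR_add_right add.commute)
    then show ?thesis unfolding S_def using b1pos by auto
  qed
  have Sclosed: "closed S"
  proof -
    have "S = {\<beta>. 0 \<le> \<beta>} \<inter> ((\<lambda>\<beta>. d + \<beta> *\<^sub>R z) -` K)" unfolding S_def by auto
    moreover have "closed ((\<lambda>\<beta>. d + \<beta> *\<^sub>R z) -` K)"
      by (intro closed_vimage K_closed continuous_intros)
    ultimately show ?thesis by (auto intro!: closed_Int simp: closed_Collect_le)
  qed
  have bdd: "bdd_below S" unfolding S_def by (auto intro: bdd_belowI[of _ 0])
  define \<beta>0 where "\<beta>0 = Inf S"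
  have b0S: "\<beta>0 \<in> S" unfolding \<beta>0_def using \<open>\<beta>1 \<in> S\<close> bdd Sclosed by (intro closed_contains_Inf) auto
  show ?thesis
  proof (cases "\<beta>0 = 0")
    case True then show ?thesis using b0S unfolding S_def by auto
  next
    case False
    then have b0pos: "\<beta>0 > 0" using b0S unfolding S_def by auto
    define \<beta>' where "\<beta>' = \<beta>0 * t' / t"
    have "\<beta>' \<in> S"
    proof -
      have h1: "Y *v (d + \<beta>0 *\<^sub>R z) \<in> K" using b0S Y NN_D unfolding S_def by auto
      have h3: "\<beta>0 *\<^sub>R (t' *\<^sub>R z - Y *v z) \<in> K" using z(4) b0pos by (intro K_scale) auto
      have "Y *v (d + \<beta>0 *\<^sub>R z) + (t *\<^sub>R d - Y *v d) + \<beta>0 *\<^sub>R (t' *\<^sub>R z - Y *v z) \<in> K"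
        using h1 d h3 by (intro K_add)
      then have "(1/t) *\<^sub>R (Y *v (d + \<beta>0 *\<^sub>R z) + (t *\<^sub>R d - Y *v d) + \<beta>0 *\<^sub>R (t' *\<^sub>R z - Y *v z)) \<in> K"
        using tpos by (intro K_scale) auto
      moreover have "(1/t) *\<^sub>R (Y *v (d + \<beta>0 *\<^sub>R z) + (t *\<^sub>R d - Y *v d) + \<beta>0 *\<^sub>R (t' *\<^sub>R z - Y *v z))
          = d + \<beta>' *\<^sub>R z"
        unfolding \<beta>'_def using tpos
        by (simp add: matrix_vector_right_distrib matrix_vector_mult_scaleR algebra_simps)
      ultimately have "d + \<beta>' *\<^sub>R z \<in> K" by simp
      moreover have "0 \<le> \<beta>'" unfolding \<beta>'_def using b0pos z(2) tpos by simp
      ultimately show ?thesis unfolding S_def by auto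
    qed
    then have "\<beta>0 \<le> \<beta>'" unfolding \<beta>0_def using bdd by (rule cInf_lower)
    moreover have "\<beta>' < \<beta>0" unfolding \<beta>'_def using b0pos z tpos by (simp add: field_simps)
    ultimately show ?thesis by simp
  qed
qed

lemma KR2:
  assumes Y: "NN Y" and x: "x \<in> K" "x \<noteq> 0" and mu: "Y *v x - \<mu> *\<^sub>R x \<in> K"
  shows "\<mu> \<le> spectral_radius Y"
proof (rule ccontr)
  assume "\<not> ?thesis"
  then have "spectral_radius Y < \<mu>" by simp
  moreover have "\<mu> *\<^sub>R (- x) - Y *v (- x) \<in> K" using mu by (simp add: mv_neg)
  ultimately have "- x \<in> K" using RP[OF Y] by blast
  then show False using x K_pointed by blast
qed

lemma RP_surj:
  assumes Y: "NN Y" and t: "spectral_radius Y < t"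
  shows "\<exists>w. t *\<^sub>R w - Y *v w = m"
proof -
  define f where "f w = (t *\<^sub>R mat 1 - Y) *v w" for w
  have f_eq: "f w = t *\<^sub>R w - Y *v w" for w
    unfolding f_def by (simp add: matrix_vector_mult_diff_rdistrib scaleR_matrix_vector_assoc[symmetric])
  have lin: "linear f" unfolding f_def by (rule matrix_vector_mul_linear)
  have "inj f"
  proof (rule injI)
    fix u w assume "f u = f w"
    then have "f (u - w) = 0" using lin by (simp add: linear_diff)
    then have h: "t *\<^sub>R (u - w) - Y *v (u - w) = 0" by (simp add: f_eq)
    then have "u - w \<in> K" using RP[OF Y t] K_zero by simp
    moreover have "- (u - w) \<in> K"
    proof -
      have "t *\<^sub>R (- (u - w)) - Y *v (- (u - w)) = - (t *\<^sub>R (u - w) - Y *v (u - w))"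
        by (simp only: mv_neg scaleR_minus_right minus_diff_eq diff_minus_eq_add) (simp add: algebra_simps)
      then have "t *\<^sub>R (- (u - w)) - Y *v (- (u - w)) \<in> K" using h K_zero by simp
      then show ?thesis using RP[OF Y t] by blast
    qed
    ultimately show "u = w" using K_pointed by fastforce
  qed
  then have "surj f" using lin by (simp add: linear_injective_imp_surjective)
  then obtain w where "f w = m" by (metis surjD)
  then show ?thesis using f_eq by auto
qed

end


lemma cancel_r: assumes "invertible (F::real^'n^'n)" shows "(X::real^'n^'n) ** F ** matrix_inv F = X"
  by (simp add: matrix_mul_assoc[symmetric] minv_r[OF assms])
lemma cancel_l: assumes "invertible (F::real^'n^'n)" shows "(X::real^'n^'n) ** matrix_inv F ** F = X"
  by (simp add: matrix_mul_assoc[symmetric] minv_l[OF assms])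

lemma mv_I_minus: "(mat 1 - Q) *v (x::real^'n) = x - Q *v x"
  by (simp add: matrix_vector_mult_diff_rdistrib)

context pcone
begin

lemma split_facts:
  assumes AUV: "A = U - V" and Uinv: "invertible U" and NUi: "NN (matrix_inv U)"
    and NV: "NN V"
    and FG: "U = F - G" and Finv: "invertible F" and NFi: "NN (matrix_inv F)"
    and NP: "NN (G ** matrix_inv F)"
    and comm: "V ** matrix_inv F ** G = G ** matrix_inv F ** V"
    and s: "s \<ge> 1"
  defines "P \<equiv> G ** matrix_inv F"
    and "T \<equiv> matpow (matrix_inv F ** G) s + (\<Sum>j<s. matpow (matrix_inv F ** G) j ** matrix_inv F ** V)"
    and "Q \<equiv> matpow (G ** matrix_inv F) s + (\<Sum>j<s. matpow (G ** matrix_inv F) j ** (V ** matrix_inv F))"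
  shows "spectral_radius T = spectral_radius Q" "NN Q"
    "mat 1 - Q = (A ** matrix_inv U) ** (mat 1 - matpow P s)" "NN (matpow P s)"
    "spectral_radius (matpow P s) < 1"
proof -
  have Q_def: "Q = matpow P s + (\<Sum>j<s. matpow P j ** (V ** matrix_inv F))" unfolding Q_def P_def ..
  define Fi where "Fi = matrix_inv F"
  define Ui where "Ui = matrix_inv U"
  define H where "H = Fi ** G"
  have FFi: "F ** Fi = mat 1" "Fi ** F = mat 1" unfolding Fi_def using Finv minv_l minv_r by auto
  have UUi: "U ** Ui = mat 1" "Ui ** U = mat 1" unfolding Ui_def using Uinv minv_l minv_r by auto
  have cr: "X ** F ** Fi = X" "X ** Fi ** F = X" for X :: "real^'n^'n"
    unfolding Fi_def using cancel_r[OF Finv] cancel_l[OF Finv] by auto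
  have cru: "X ** U ** Ui = X" "X ** Ui ** U = X" for X :: "real^'n^'n"
    unfolding Ui_def using cancel_r[OF Uinv] cancel_l[OF Uinv] by auto
  have P_def': "P = G ** Fi" unfolding P_def Fi_def ..
  have hFH: "F ** matpow H j = matpow P j ** F" for j
  proof (induction j)
    case 0 then show ?case by simp
  next
    case (Suc j)
    have "F ** matpow H (Suc j) = F ** Fi ** G ** matpow H j" by (simp add: H_def matrix_mul_assoc)
    also have "\<dots> = G ** matpow H j" using FFi by simp
    also have "\<dots> = G ** Fi ** (F ** matpow H j)" by (simp add: matrix_mul_assoc cr)
    also have "\<dots> = matpow P (Suc j) ** F" using Suc by (simp add: P_def' matrix_mul_assoc)
    finally show ?case .
  qed
  have simT: "F ** T ** Fi = Q"
  proof -
    have "F ** T ** Fi = F ** matpow H s ** Fi + (\<Sum>j<s. F ** (matpow H j ** Fi ** V) ** Fi)"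
      unfolding T_def H_def[symmetric] Fi_def[symmetric]
      by (simp add: matrix_add_ldistrib mm_add_r mm_sum_l mm_sum_r)
    also have "\<dots> = Q"
    proof -
      have "F ** matpow H s ** Fi = matpow P s" by (simp add: hFH cr)
      moreover have "F ** (matpow H j ** Fi ** V) ** Fi = matpow P j ** (V ** Fi)" for j
      proof -
        have "F ** (matpow H j ** Fi ** V) ** Fi = (F ** matpow H j) ** Fi ** V ** Fi"
          by (simp add: matrix_mul_assoc)
        also have "\<dots> = matpow P j ** (V ** Fi)" by (simp add: hFH cr matrix_mul_assoc)
        finally show ?thesis .
      qed
      ultimately show ?thesis unfolding Q_def Fi_def by simp
    qed
    finally show ?thesis .
  qed
  show "spectral_radius T = spectral_radius Q"
    unfolding spectral_radius_def using eig_sim[OF Finv, of T] simT by (simp add: Fi_def)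
  have NPs: "NN (matpow P j)" for j using NP NN_matpow unfolding P_def by blast
  then show "NN (matpow P s)" .
  show "NN Q" unfolding Q_def
    using NPs NV NFi by (intro NN_add NN_sum NN_mult) auto
  define R where "R = V ** Ui"
  have c1: "U ** Fi = mat 1 - P"
  proof -
    have "G = F - U" using FG by simp
    then have "P = F ** Fi - U ** Fi" unfolding P_def' by (simp add: mm_diff_r)
    then show ?thesis using FFi by simp
  qed
  have c2: "V ** Fi = R ** (mat 1 - P)"
    unfolding R_def c1[symmetric] by (simp only: matrix_mul_assoc cru(2))
  have star: "V ** Fi ** U = U ** Fi ** V"
  proof -
    have "G = F - U" using FG by simp
    have "V ** Fi ** G = V - V ** Fi ** U" unfolding \<open>G = F - U\<close> by (simp add: mm_diff_l cr)
    moreover have "G ** Fi ** V = V - U ** Fi ** V"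
      unfolding \<open>G = F - U\<close> by (simp add: mm_diff_r FFi)
    ultimately show ?thesis using comm unfolding Fi_def by simp
  qed
  have c3: "R ** P = P ** R"
  proof -
    have P': "P = mat 1 - U ** Fi" using c1 by simp
    have "R ** P = R - V ** Fi" unfolding P' R_def by (simp add: mm_diff_l matrix_mul_assoc cru)
    moreover have "P ** R = R - V ** Fi"
    proof -
      have "P ** R = R - U ** Fi ** V ** Ui" unfolding P' R_def by (simp add: mm_diff_r matrix_mul_assoc)
      also have "U ** Fi ** V ** Ui = V ** Fi" by (simp only: star[symmetric] cru(1))
      finally show ?thesis .
    qed
    ultimately show ?thesis by simp
  qed
  have c4: "R ** matpow P j = matpow P j ** R" for j
  proof (induction j)
    case 0 then show ?case by simp
  next
    case (Suc j)
    have "R ** matpow P (Suc j) = (R ** P) ** matpow P j" by (simp add: matrix_mul_assoc)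
    also have "\<dots> = P ** (R ** matpow P j)" by (simp add: c3 matrix_mul_assoc)
    also have "\<dots> = matpow P (Suc j) ** R" using Suc by (simp add: matrix_mul_assoc)
    finally show ?case .
  qed
  have c5: "(\<Sum>j<k. matpow P j ** (R ** (mat 1 - P))) = R ** (mat 1 - matpow P k)" for k
  proof (induction k)
    case 0 then show ?case by simp
  next
    case (Suc k)
    have "(\<Sum>j<Suc k. matpow P j ** (R ** (mat 1 - P))) = R ** (mat 1 - matpow P k) + matpow P k ** (R ** (mat 1 - P))"
      using Suc by simp
    also have "matpow P k ** (R ** (mat 1 - P)) = R ** (matpow P k - matpow P (Suc k))"
    proof -
      have "matpow P k ** (R ** (mat 1 - P)) = R ** (matpow P k ** (mat 1 - P))"
        by (simp add: matrix_mul_assoc c4)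
      also have "matpow P k ** (mat 1 - P) = matpow P k - matpow P (Suc k)"
        by (simp add: mm_diff_l matpow_comm)
      finally show ?thesis .
    qed
    also have "R ** (mat 1 - matpow P k) + R ** (matpow P k - matpow P (Suc k)) = R ** (mat 1 - matpow P (Suc k))"
      by (simp add: mm_diff_l)
    finally show ?case .
  qed
  have Qf: "Q = matpow P s + R ** (mat 1 - matpow P s)"
    unfolding Q_def Fi_def[symmetric] c2 c5 ..
  have X: "A ** Ui = mat 1 - R" unfolding AUV R_def by (simp add: mm_diff_r UUi)
  show "mat 1 - Q = (A ** matrix_inv U) ** (mat 1 - matpow P s)"
    unfolding Ui_def[symmetric] X Qf by (simp add: mm_diff_l mm_diff_r)
  obtain y where y: "y \<in> K" "y \<noteq> 0" "matpow P s *v y = spectral_radius (matpow P s) *\<^sub>R y"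
    using KR(1)[OF NPs] by blast
  define \<nu> where "\<nu> = spectral_radius (matpow P s)"
  define S where "S = (\<Sum>j<s. matpow P j)"
  have c6: "(mat 1 - P) ** (\<Sum>j<k. matpow P j) = mat 1 - matpow P k" for k
  proof (induction k)
    case 0 then show ?case by simp
  next
    case (Suc k)
    then show ?case by (simp add: matrix_add_ldistrib mm_diff_r)
  qed
  have e1: "U *v (Fi *v (S *v y)) = (1 - \<nu>) *\<^sub>R y"
  proof -
    have "U *v (Fi *v (S *v y)) = ((mat 1 - P) ** S) *v y" by (simp add: matrix_vector_mul_assoc matrix_mul_assoc c1)
    also have "\<dots> = y - matpow P s *v y" unfolding S_def c6 by (simp add: mv_I_minus)
    also have "\<dots> = (1 - \<nu>) *\<^sub>R y" using y(3) unfolding \<nu>_def by (simp add: algebra_simps)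
    finally show ?thesis .
  qed
  have e2: "Fi *v (S *v y) = (1 - \<nu>) *\<^sub>R (Ui *v y)"
  proof -
    have "Ui *v (U *v (Fi *v (S *v y))) = (Ui ** U) *v (Fi *v (S *v y))" by (rule matrix_vector_mul_assoc)
    also have "\<dots> = Fi *v (S *v y)" by (simp add: UUi)
    finally have "Ui *v (U *v (Fi *v (S *v y))) = Fi *v (S *v y)" .
    then show ?thesis using e1 by (simp add: matrix_vector_mult_scaleR)
  qed
  obtain m where m: "s = Suc m" using s by (cases s) auto
  define z where "z = (\<Sum>j<m. matpow P (Suc j) *v y)"
  have zK: "z \<in> K" unfolding z_def by (intro K_sum NN_D[OF NPs] y(1) finite_lessThan)
  have Sy: "S *v y = y + z"
    unfolding S_def m z_def by (simp add: sum.lessThan_Suc_shift mv_sum_r matrix_vector_mult_add_rdistrib del: sum.lessThan_Suc)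
  have ne: "Fi *v (S *v y) \<noteq> 0"
  proof
    assume "Fi *v (S *v y) = 0"
    then have "F *v (Fi *v (S *v y)) = 0" by simp
    then have "y + z = 0" using Sy by (simp add: matrix_vector_mul_assoc FFi)
    then have "- y \<in> K" using zK by (simp add: eq_neg_iff_add_eq_0[symmetric])
    then show False using y K_pointed by blast
  qed
  have inK: "Fi *v (S *v y) \<in> K" using NFi unfolding Fi_def using Sy zK y(1) NN_D K_add by auto
  show "spectral_radius (matpow P s) < 1"
  proof (rule ccontr)
    assume "\<not> ?thesis"
    then have "\<nu> - 1 \<ge> 0" unfolding \<nu>_def by simp
    then have "(\<nu> - 1) *\<^sub>R (Ui *v y) \<in> K" using NUi y(1) NN_D unfolding Ui_def by (intro K_scale) auto
    moreover have "- (Fi *v (S *v y)) = (\<nu> - 1) *\<^sub>R (Ui *v y)" unfolding e2 by (simp add: algebra_simps)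
    ultimately have "- (Fi *v (S *v y)) \<in> K" by simp
    then show False using inK ne K_pointed by blast
  qed
qed

lemma lt1:
  assumes NQ: "NN Q" and ND: "NN D" and rD: "spectral_radius D < 1"
    and XY: "X ** Y = mat 1" and YX: "Y ** X = mat 1" and NY: "NN Y"
    and Qe: "mat 1 - Q = X ** (mat 1 - D)"
  shows "spectral_radius Q < 1"
proof (rule ccontr)
  assume "\<not> ?thesis"
  then have l1: "spectral_radius Q \<ge> 1" by simp
  obtain x where x: "x \<in> K" "x \<noteq> 0" "Q *v x = spectral_radius Q *\<^sub>R x" using KR(1)[OF NQ] by blast
  have "Y *v ((mat 1 - Q) *v x) = (mat 1 - D) *v x"
    by (simp add: Qe matrix_vector_mul_assoc matrix_mul_assoc YX)
  then have "x - D *v x = (1 - spectral_radius Q) *\<^sub>R (Y *v x)"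
    using x(3) by (simp add: mv_I_minus algebra_simps matrix_vector_mult_scaleR mv_diff)
  then have "D *v x - 1 *\<^sub>R x = (spectral_radius Q - 1) *\<^sub>R (Y *v x)" by (simp add: algebra_simps)
  moreover have "(spectral_radius Q - 1) *\<^sub>R (Y *v x) \<in> K" using l1 NY x(1) NN_D by (intro K_scale) auto
  ultimately have "D *v x - 1 *\<^sub>R x \<in> K" by simp
  then have "1 \<le> spectral_radius D" by (rule KR2[OF ND x(1,2)])
  then show False using rD by simp
qed

lemma compare:
  assumes NQ: "NN Q" and NQb: "NN Qb" and ND: "NN D" and NDb: "NN Db" and NDD: "NN (Db - D)"
    and rD: "spectral_radius D < 1" and rDb: "spectral_radius Db < 1"
    and XY: "X ** Y = mat 1" and YX: "Y ** X = mat 1" and NY: "NN Y"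
    and Qe: "mat 1 - Q = X ** (mat 1 - D)" and Qbe: "mat 1 - Qb = X ** (mat 1 - Db)"
  shows "spectral_radius Q \<le> spectral_radius Qb \<and> spectral_radius Qb < 1"
proof
  show "spectral_radius Qb < 1" by (rule lt1[OF NQb NDb rDb XY YX NY Qbe])
  have rQ: "spectral_radius Q < 1" by (rule lt1[OF NQ ND rD XY YX NY Qe])
  define l where "l = spectral_radius Q"
  obtain x where x: "x \<in> K" "x \<noteq> 0" "Q *v x = l *\<^sub>R x" using KR(1)[OF NQ] unfolding l_def by blast
  show "spectral_radius Q \<le> spectral_radius Qb"
  proof (rule ccontr)
    assume "\<not> ?thesis"
    then have lt: "spectral_radius Qb < l" unfolding l_def by simp
    have l1: "1 - l > 0" using rQ unfolding l_def by simp
    define m where "m = Y *v x"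
    have mK: "m \<in> K" unfolding m_def using NY x(1) NN_D by blast
    have "Y *v ((mat 1 - Q) *v x) = (mat 1 - D) *v x"
      by (simp add: Qe matrix_vector_mul_assoc matrix_mul_assoc YX)
    then have Dx: "x - D *v x = (1 - l) *\<^sub>R m"
      using x(3) unfolding m_def by (simp add: mv_I_minus algebra_simps matrix_vector_mult_scaleR mv_diff)
    define u where "u = (1 / (1 - l)) *\<^sub>R x"
    have uK: "u \<in> K" unfolding u_def using x(1) l1 by (intro K_scale) auto
    have Du: "u - D *v u = m"
    proof -
      have "u - D *v u = (1 / (1 - l)) *\<^sub>R (x - D *v x)"
        unfolding u_def by (simp add: matrix_vector_mult_scaleR scaleR_diff_right)
      then show ?thesis using Dx l1 by simp
    qed
    obtain w where w: "1 *\<^sub>R w - Db *v w = m" using RP_surj[OF NDb rDb] by blast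
    have "1 *\<^sub>R (w - u) - Db *v (w - u) = (Db - D) *v u"
    proof -
      have "1 *\<^sub>R (w - u) - Db *v (w - u) = (w - Db *v w) - (u - D *v u) + (Db *v u - D *v u)"
        by (simp add: mv_diff algebra_simps)
      also have "\<dots> = (Db - D) *v u" using w Du by (simp add: matrix_vector_mult_diff_rdistrib)
      finally show ?thesis .
    qed
    then have "1 *\<^sub>R (w - u) - Db *v (w - u) \<in> K" using NDD uK NN_D by simp
    then have wu: "w - u \<in> K" by (rule RP[OF NDb rDb])
    have Qbw: "Qb *v w = w - x"
    proof -
      have "(mat 1 - Qb) *v w = X *v ((mat 1 - Db) *v w)" by (simp add: Qbe matrix_vector_mul_assoc)
      also have "\<dots> = X *v m" using w by (simp add: mv_I_minus)
      also have "\<dots> = x" unfolding m_def by (simp add: matrix_vector_mul_assoc XY)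
      finally show ?thesis by (simp add: mv_I_minus algebra_simps)
    qed
    have "l *\<^sub>R (- w) - Qb *v (- w) = (1 - l) *\<^sub>R (w - u)"
      unfolding u_def using Qbw l1 by (simp add: mv_neg algebra_simps)
    moreover have "(1 - l) *\<^sub>R (w - u) \<in> K" using wu l1 by (intro K_scale) auto
    ultimately have "l *\<^sub>R (- w) - Qb *v (- w) \<in> K" by simp
    then have "- w \<in> K" by (rule RP[OF NQb lt])
    moreover have "w \<in> K" using K_add[OF uK wu] by simp
    ultimately have "w = 0" using K_pointed by blast
    then have "- u \<in> K" using wu by simp
    then have "u = 0" using uK K_pointed by blast
    then show False using x(2) l1 unfolding u_def by simp
  qed
qed

end


theorem theorem3p8:
  fixes K :: "(real^'n) set" and A U V F G Fb Gb :: "real^'n^'n" and s :: nat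
  assumes "proper_cone K"
    and "K_monotone K A"
    and "K_regular_splitting K A U V"
    and "K_nonneg K U"
    and "K_weak_regular_splitting_II K U F G"
    and "K_weak_regular_splitting_II K U Fb Gb"
    and "V ** matrix_inv F ** G = G ** matrix_inv F ** V"
    and "V ** matrix_inv Fb ** Gb = Gb ** matrix_inv Fb ** V"
    and "s \<ge> 1"
    and "K_ge K (Gb ** matrix_inv Fb) (G ** matrix_inv F)"
  shows "spectral_radius
           (matpow (matrix_inv F ** G) s
             + (\<Sum>j<s. matpow (matrix_inv F ** G) j ** matrix_inv F ** V))
         \<le> spectral_radius
           (matpow (matrix_inv Fb ** Gb) s
             + (\<Sum>j<s. matpow (matrix_inv Fb ** Gb) j ** matrix_inv Fb ** V))
       \<and> spectral_radius
           (matpow (matrix_inv Fb ** Gb) s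
             + (\<Sum>j<s. matpow (matrix_inv Fb ** Gb) j ** matrix_inv Fb ** V)) < 1"
proof -
  interpret pcone K by unfold_locales (rule assms(1))
  have Ainv: "invertible A" and NAi: "NN (matrix_inv A)"
    using assms(2) unfolding K_monotone_def NN_def by auto
  have AUV: "A = U - V" and Uinv: "invertible U" and NUi: "NN (matrix_inv U)" and NV: "NN V"
    using assms(3) unfolding K_regular_splitting_def NN_def by auto
  have NU: "NN U" using assms(4) unfolding NN_def .
  have FG: "U = F - G" and Finv: "invertible F" and NFi: "NN (matrix_inv F)"
    and NP: "NN (G ** matrix_inv F)"
    using assms(5) unfolding K_weak_regular_splitting_II_def NN_def by auto
  have FGb: "U = Fb - Gb" and Fbinv: "invertible Fb" and NFbi: "NN (matrix_inv Fb)"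
    and NPb: "NN (Gb ** matrix_inv Fb)"
    using assms(6) unfolding K_weak_regular_splitting_II_def NN_def by auto
  have NPP: "NN (Gb ** matrix_inv Fb - G ** matrix_inv F)"
    using assms(10) unfolding K_ge_def NN_def .
  note sf1 = split_facts[OF AUV Uinv NUi NV FG Finv NFi NP assms(7) assms(9)]
  note sf2 = split_facts[OF AUV Uinv NUi NV FGb Fbinv NFbi NPb assms(8) assms(9)]
  have XY: "(A ** matrix_inv U) ** (U ** matrix_inv A) = mat 1"
  proof -
    have "(A ** matrix_inv U) ** (U ** matrix_inv A) = A ** (matrix_inv U ** U) ** matrix_inv A"
      by (simp add: matrix_mul_assoc)
    also have "\<dots> = mat 1" using minv_l[OF Uinv] minv_r[OF Ainv] by simp
    finally show ?thesis .
  qed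
  have YX: "(U ** matrix_inv A) ** (A ** matrix_inv U) = mat 1"
  proof -
    have "(U ** matrix_inv A) ** (A ** matrix_inv U) = U ** (matrix_inv A ** A) ** matrix_inv U"
      by (simp add: matrix_mul_assoc)
    also have "\<dots> = mat 1" using minv_l[OF Ainv] minv_r[OF Uinv] by simp
    finally show ?thesis .
  qed
  have NY: "NN (U ** matrix_inv A)" using NN_mult[OF NU NAi] .
  have NDD: "NN (matpow (Gb ** matrix_inv Fb) s - matpow (G ** matrix_inv F) s)"
    by (rule NN_pow_mono[OF NP NPP])
  have "spectral_radius
          (matpow (G ** matrix_inv F) s + (\<Sum>j<s. matpow (G ** matrix_inv F) j ** (V ** matrix_inv F)))
        \<le> spectral_radius
          (matpow (Gb ** matrix_inv Fb) s + (\<Sum>j<s. matpow (Gb ** matrix_inv Fb) j ** (V ** matrix_inv Fb)))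
      \<and> spectral_radius
          (matpow (Gb ** matrix_inv Fb) s + (\<Sum>j<s. matpow (Gb ** matrix_inv Fb) j ** (V ** matrix_inv Fb))) < 1"
    by (rule compare[OF sf1(2) sf2(2) sf1(4) sf2(4) NDD sf1(5) sf2(5) XY YX NY sf1(3) sf2(3)])
  then show ?thesis using sf1(1) sf2(1) by simp
qed


end
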